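(* Let $T\in\mathbb{R}$ and let $S:[0,1]\to\mathbb{R}$ be continuous with $S(0)=S(1)=0$. For $x,y\in\mathbb{R}$ set $x\oplus_S y=\min_{p\in[0,1]}\big(px+(1-p)y-T\,S(p)\big)$. Let $\mathbf{T}$ be an $(n,2)$-tree with $n\ge2$. Then for all $x_1,\ldots,x_n\in\mathbb{R}$, $$(x_1\oplus_S\cdots\oplus_S x_n)_{\mathbf{T}}=\min_{p\in\Delta_n}\Big(\sum_{i=1}^n p_ix_i-T\,S_{\mathbf{T}}(p_1,\ldots,p_n)\Big).$$
   Context: An $(n,2)$-tree is a finite rooted tree in which every vertex is either a leaf or has exactly two children, ordered as a left and a right child, and whose $n$ leaves are labelled bijectively by $\{1,\ldots,n\}$. $\Delta_n=\{p\in[0,\infty)^n:\sum_ip_i=1\}$. For such a tree (or a subtree, whose leaves carry a subset $L$ of labels) define recursively: if the tree is a single leaf labelled $i$, then its value is $x_i$ and its entropy is $0$; otherwise, with left subtree $\mathbf{L}$ (label set $L$) and right subtree $\mathbf{D}$ (label set $D$), the value is $(x_1\oplus_S\cdots\oplus_S x_n)_{\mathbf{T}}=(\text{value of }\mathbf{L})\oplus_S(\text{value of }\mathbf{D})$, and for $p$ a probability vector indexed by the labels, with $P_L=\sum_{i\in L}p_i$, $P_D=\sum_{i\in D}p_i$, $$S_{\mathbf{T}}(p)=S(P_L)+P_L\,S_{\mathbf{L}}\big((p_i/P_L)_{i\in L}\big)+P_D\,S_{\mathbf{D}}\big((p_i/P_D)_{i\in D}\big),$$ where a term $P\,S_{\mathbf{A}}(\cdot/P)$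 is taken to be $0$ when $P=0$. *)

theory Defs
  imports "HOL-Analysis.Analysis"
begin

datatype btree = Leaf nat | Node btree btree

fun leaves :: "btree \<Rightarrow> nat list" where
  "leaves (Leaf i) = [i]"
| "leaves (Node l r) = leaves l @ leaves r"

definition n2_tree :: "nat \<Rightarrow> btree \<Rightarrow> bool" where
  "n2_tree n t \<longleftrightarrow> distinct (leaves t) \<and> set (leaves t) = {1..n}"

text \<open>x \<oplus>_S y = min over p in [0,1] of (p x + (1-p) y - T S(p)); the minimum exists
  by continuity of S, so it coincides with the infimum.\<close>
definition oplusS :: "real \<Rightarrow> (real \<Rightarrow> real) \<Rightarrow> real \<Rightarrow> real \<Rightarrow> real" where
  "oplusS T S x y = Inf ((\<lambda>p. p * x + (1 - p) * y - T * S p) ` {0..1})"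

fun tree_val :: "real \<Rightarrow> (real \<Rightarrow> real) \<Rightarrow> btree \<Rightarrow> (nat \<Rightarrow> real) \<Rightarrow> real" where
  "tree_val T S (Leaf i) x = x i"
| "tree_val T S (Node l r) x = oplusS T S (tree_val T S l x) (tree_val T S r x)"

fun tree_ent :: "(real \<Rightarrow> real) \<Rightarrow> btree \<Rightarrow> (nat \<Rightarrow> real) \<Rightarrow> real" where
  "tree_ent S (Leaf i) p = 0"
| "tree_ent S (Node l r) p =
     (let PL = (\<Sum>i\<in>set (leaves l). p i); PD = (\<Sum>i\<in>set (leaves r). p i) in
      S PL
      + (if PL = 0 then 0 else PL * tree_ent S l (\<lambda>i. p i / PL))
      + (if PD = 0 then 0 else PD * tree_ent S r (\<lambda>i. p i / PD)))"

definition prob_simplex :: "nat \<Rightarrow> (nat \<Rightarrow> real) set" where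
  "prob_simplex n = {p. (\<forall>i\<in>{1..n}. 0 \<le> p i) \<and> (\<Sum>i=1..n. p i) = 1}"

end

theory Submission
  imports Defs
begin

lemma ent_cong:
  "(\<forall>i\<in>set (leaves t). p i = p' i) \<Longrightarrow> tree_ent S t p = tree_ent S t p'"
proof (induction t arbitrary: p p')
  case (Leaf i) then show ?case by simp
next
  case (Node l r)
  have L: "(\<Sum>i\<in>set (leaves l). p i) = (\<Sum>i\<in>set (leaves l). p' i)"
    using Node.prems by (intro sum.cong) auto
  have D: "(\<Sum>i\<in>set (leaves r). p i) = (\<Sum>i\<in>set (leaves r). p' i)"
    using Node.prems by (intro sum.cong) auto
  have el: "tree_ent S l (\<lambda>i. p i / c) = tree_ent S l (\<lambda>i. p' i / c)" for c
    using Node.prems by (intro Node.IH(1)) auto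
  have er: "tree_ent S r (\<lambda>i. p i / c) = tree_ent S r (\<lambda>i. p' i / c)" for c
    using Node.prems by (intro Node.IH(2)) auto
  show ?case by (simp add: Let_def L D el er)
qed

definition valid :: "nat set \<Rightarrow> (nat \<Rightarrow> real) \<Rightarrow> bool" where
  "valid A p \<longleftrightarrow> (\<forall>i\<in>A. 0 \<le> p i) \<and> (\<Sum>i\<in>A. p i) = 1"

lemma half_bound:
  fixes a q :: real and A :: "nat set"
  assumes fin: "finite A" and nn: "\<forall>i\<in>A. 0 \<le> p i" and q: "q = (\<Sum>i\<in>A. p i)"
    and IH: "\<And>p'. valid A p' \<Longrightarrow> a \<le> (\<Sum>i\<in>A. p' i * x i) - T * E p'"
  shows "q * a \<le> (\<Sum>i\<in>A. p i * x i) - T * (if q = 0 then 0 else q * E (\<lambda>i. p i / q))"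
proof (cases "q = 0")
  case True
  then have "\<forall>i\<in>A. p i = 0" using sum_nonneg_eq_0_iff[OF fin] nn q by auto
  then show ?thesis using True by simp
next
  case False
  have "q \<ge> 0" unfolding q using nn by (simp add: sum_nonneg)
  then have qpos: "q > 0" using False by simp
  have "(\<Sum>i\<in>A. p i / q) = (\<Sum>i\<in>A. p i) / q" by (rule sum_divide_distrib[symmetric])
  then have "(\<Sum>i\<in>A. p i / q) = q / q" using q by simp
  then have "(\<Sum>i\<in>A. p i / q) = 1" using False by simp
  then have v: "valid A (\<lambda>i. p i / q)" unfolding valid_def
    using nn qpos by simp
  have "a \<le> (\<Sum>i\<in>A. p i / q * x i) - T * E (\<lambda>i. p i / q)" using IH[OF v] .
  moreover have "(\<Sum>i\<in>A. p i / q * x i) = (\<Sum>i\<in>A. p i * x i) / q"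
    by (simp add: sum_divide_distrib)
  ultimately have "a \<le> (\<Sum>i\<in>A. p i * x i) / q - T * E (\<lambda>i. p i / q)" by simp
  then have "q * a \<le> q * ((\<Sum>i\<in>A. p i * x i) / q - T * E (\<lambda>i. p i / q))"
    using qpos by simp
  also have "\<dots> = (\<Sum>i\<in>A. p i * x i) - T * (q * E (\<lambda>i. p i / q))"
    using False by (simp add: algebra_simps)
  finally show ?thesis using False by simp
qed

lemma half_eq:
  fixes a q :: real and A :: "nat set"
  assumes fin: "finite A" and q: "0 \<le> q" and vp: "valid A pl"
    and eqp: "\<forall>i\<in>A. p i = q * pl i"
    and a: "a = (\<Sum>i\<in>A. pl i * x i) - T * E pl"
    and cong: "\<And>p'. \<forall>i\<in>A. p' i = pl i \<Longrightarrow> E p' = E pl"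
  shows "(\<Sum>i\<in>A. p i * x i) - T * (if q = 0 then 0 else q * E (\<lambda>i. p i / q)) = q * a"
proof (cases "q = 0")
  case True then show ?thesis using eqp by simp
next
  case False
  have "E (\<lambda>i. p i / q) = E pl" using eqp False by (intro cong) simp
  moreover have "(\<Sum>i\<in>A. p i * x i) = q * (\<Sum>i\<in>A. pl i * x i)"
    using eqp by (simp add: sum_distrib_left mult.assoc)
  ultimately show ?thesis using False by (simp add: a algebra_simps)
qed

lemma main:
  fixes T :: real and S :: "real \<Rightarrow> real"
  assumes cont: "continuous_on {0..1} S" and dist: "distinct (leaves t)"
  shows "(\<exists>p. valid (set (leaves t)) p \<and> tree_val T S t x = (\<Sum>i\<in>set (leaves t). p i * x i) - T * tree_ent S t p)
    \<and> (\<forall>p. valid (set (leaves t)) p \<longrightarrow> tree_val T S t x \<le> (\<Sum>i\<in>set (leaves t). p i * x i) - T * tree_ent S t p)"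
  using dist
proof (induction t)
  case (Leaf i)
  show ?case by (auto simp: valid_def intro!: exI[of _ "\<lambda>_. 1"])
next
  case (Node l r)
  let ?L = "set (leaves l)" and ?D = "set (leaves r)"
  have dl: "distinct (leaves l)" and dr: "distinct (leaves r)" and disj: "?L \<inter> ?D = {}"
    using Node.prems by auto
  note IHl = Node.IH(1)[OF dl] and IHr = Node.IH(2)[OF dr]
  define a where "a = tree_val T S l x"
  define b where "b = tree_val T S r x"
  define f where "f q = q * a + (1 - q) * b - T * S q" for q
  have cf: "continuous_on {0..1} f" unfolding f_def
    by (intro continuous_intros cont)
  obtain q0 where q0: "q0 \<in> {0..1}" and qmin: "\<forall>q\<in>{0..1}. f q0 \<le> f q"
    using continuous_attains_inf[OF compact_Icc _ cf] by auto
  have val: "tree_val T S (Node l r) x = f q0"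
    unfolding tree_val.simps oplusS_def a_def[symmetric] b_def[symmetric]
    using q0 qmin by (intro cInf_eq_minimum) (auto simp: f_def)
  have sumsplit: "(\<Sum>i\<in>set (leaves (Node l r)). g i) = (\<Sum>i\<in>?L. g i) + (\<Sum>i\<in>?D. g i)" for g :: "nat \<Rightarrow> real"
    using disj by (simp add: sum.union_disjoint)
  show ?case
  proof
    from IHl obtain pl where vl: "valid ?L pl" and al: "a = (\<Sum>i\<in>?L. pl i * x i) - T * tree_ent S l pl"
      unfolding a_def by blast
    from IHr obtain pr where vr: "valid ?D pr" and br: "b = (\<Sum>i\<in>?D. pr i * x i) - T * tree_ent S r pr"
      unfolding b_def by blast
    define p where "p i = (if i \<in> ?L then q0 * pl i else (1 - q0) * pr i)" for i
    have eL: "\<forall>i\<in>?L. p i = q0 * pl i" by (simp add: p_def)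
    have eD: "\<forall>i\<in>?D. p i = (1 - q0) * pr i" using disj by (auto simp: p_def)
    have PL: "(\<Sum>i\<in>?L. p i) = q0" using eL vl by (simp add: valid_def sum_distrib_left[symmetric])
    have PD: "(\<Sum>i\<in>?D. p i) = 1 - q0" using eD vr by (simp add: valid_def sum_distrib_left[symmetric])
    have ent: "tree_ent S (Node l r) p = S q0 + (if q0 = 0 then 0 else q0 * tree_ent S l (\<lambda>i. p i / q0))
       + (if 1 - q0 = 0 then 0 else (1 - q0) * tree_ent S r (\<lambda>i. p i / (1 - q0)))"
      by (simp only: tree_ent.simps Let_def PL PD)
    have vp: "valid (set (leaves (Node l r))) p"
      unfolding valid_def
    proof
      show "\<forall>i\<in>set (leaves (Node l r)). 0 \<le> p i"
        using vl vr q0 eD by (auto simp: valid_def p_def)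
      show "(\<Sum>i\<in>set (leaves (Node l r)). p i) = 1" using sumsplit PL PD by simp
    qed
    have hL: "(\<Sum>i\<in>?L. p i * x i) - T * (if q0 = 0 then 0 else q0 * tree_ent S l (\<lambda>i. p i / q0)) = q0 * a"
      using q0 vl eL al by (intro half_eq[where E="tree_ent S l"]) (simp_all, rule ent_cong, simp)
    have hD: "(\<Sum>i\<in>?D. p i * x i) - T * (if 1 - q0 = 0 then 0 else (1 - q0) * tree_ent S r (\<lambda>i. p i / (1 - q0))) = (1 - q0) * b"
      using q0 vr eD br by (intro half_eq[where E="tree_ent S r"]) (simp_all, rule ent_cong, simp)
    have "tree_val T S (Node l r) x = (\<Sum>i\<in>set (leaves (Node l r)). p i * x i) - T * tree_ent S (Node l r) p"
      unfolding val f_def sumsplit ent distrib_left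
      using hL hD by linarith
    then show "\<exists>p. valid (set (leaves (Node l r))) p \<and> tree_val T S (Node l r) x = (\<Sum>i\<in>set (leaves (Node l r)). p i * x i) - T * tree_ent S (Node l r) p"
      using vp by blast
  next
    show "\<forall>p. valid (set (leaves (Node l r))) p \<longrightarrow> tree_val T S (Node l r) x \<le> (\<Sum>i\<in>set (leaves (Node l r)). p i * x i) - T * tree_ent S (Node l r) p"
    proof (intro allI impI)
      fix p assume vp: "valid (set (leaves (Node l r))) p"
      define q where "q = (\<Sum>i\<in>?L. p i)"
      have nnL: "\<forall>i\<in>?L. 0 \<le> p i" and nnD: "\<forall>i\<in>?D. 0 \<le> p i" using vp by (auto simp: valid_def)
      have PD: "(\<Sum>i\<in>?D. p i) = 1 - q" using vp sumsplit[of p] by (simp add: valid_def q_def)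
      have q01: "q \<in> {0..1}" using sum_nonneg[of ?L p] sum_nonneg[of ?D p] nnL nnD PD q_def by auto
      have hL: "q * a \<le> (\<Sum>i\<in>?L. p i * x i) - T * (if q = 0 then 0 else q * tree_ent S l (\<lambda>i. p i / q))"
        using nnL q_def IHl unfolding a_def by (intro half_bound) auto
      have hD: "(1 - q) * b \<le> (\<Sum>i\<in>?D. p i * x i) - T * (if 1 - q = 0 then 0 else (1 - q) * tree_ent S r (\<lambda>i. p i / (1 - q)))"
        using nnD PD IHr unfolding b_def by (intro half_bound) auto
      have ent: "tree_ent S (Node l r) p = S q + (if q = 0 then 0 else q * tree_ent S l (\<lambda>i. p i / q))
       + (if 1 - q = 0 then 0 else (1 - q) * tree_ent S r (\<lambda>i. p i / (1 - q)))"
        by (simp only: tree_ent.simps Let_def PD q_def[symmetric])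
      have "tree_val T S (Node l r) x \<le> f q" using val qmin q01 by simp
      also have "f q \<le> (\<Sum>i\<in>set (leaves (Node l r)). p i * x i) - T * tree_ent S (Node l r) p"
        unfolding f_def sumsplit ent distrib_left using hL hD by linarith
      finally show "tree_val T S (Node l r) x \<le> (\<Sum>i\<in>set (leaves (Node l r)). p i * x i) - T * tree_ent S (Node l r) p" .
    qed
  qed
qed

theorem theorem10p2:
  fixes T :: real and S :: "real \<Rightarrow> real" and n :: nat and t :: btree
    and x :: "nat \<Rightarrow> real"
  assumes "continuous_on {0..1} S" and "S 0 = 0" and "S 1 = 0"
    and "n \<ge> 2" and "n2_tree n t"
  shows "(\<exists>p\<in>prob_simplex n. tree_val T S t x = (\<Sum>i=1..n. p i * x i) - T * tree_ent S t p)
       \<and> (\<forall>p\<in>prob_simplex n. tree_val T S t x \<le> (\<Sum>i=1..n. p i * x i) - T * tree_ent S t p)"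
proof -
  have d: "distinct (leaves t)" and s: "set (leaves t) = {1..n}" using assms(5) by (auto simp: n2_tree_def)
  have ps: "prob_simplex n = {p. valid (set (leaves t)) p}" unfolding s prob_simplex_def valid_def by simp
  show ?thesis using main[OF assms(1) d, of T x] unfolding ps s Bex_def Ball_def mem_Collect_eq by blast
qed

end
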